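(* Let $\gamma>0$ and $\theta\in\mathbb R$. For each $L\ge2$ let $w_1,\dots,w_L\in\mathbb R$ with $|w_j|\ge2\gamma$ for all $j$, and consider on $\mathcal F(\mathbb C^L)$ $$\mathbf H_L=\sum_{j=1}^{L-1}w_j\,i{\mathfrak b}_{2j}{\mathfrak b}_{2j+1}+w_L\,i{\mathfrak b}_{2L}{\mathfrak b}_1 .$$ Then $\mathbf H_L$ has a spectral gap above its ground state energy that is bounded below uniformly in the length $L$ of the chain.
   Context: $\mathcal F(\mathbb C^L)$ is the fermionic Fock space with CAR operators ${\mathfrak a}_j$, $j=1,\dots,L$. Majorana operators: ${\mathfrak b}_{2j-1}=e^{i\theta/2}{\mathfrak a}_j+e^{-i\theta/2}{\mathfrak a}_j^*$, ${\mathfrak b}_{2j}=-ie^{i\theta/2}{\mathfrak a}_j+ie^{-i\theta/2}{\mathfrak a}_j^*$; in terms of these, $\mathbf H_L$ is the closed (periodic) Kitaev chain $\sum_{j=1}^{L-1}w_j[-({\mathfrak a}_j^*{\mathfrak a}_{j+1}+{\mathfrak a}_{j+1}^*{\mathfrak a}_j)+e^{i\theta}{\mathfrak a}_j{\mathfrak a}_{j+1}+e^{-i\theta}{\mathfrak a}_{j+1}^*{\mathfrak a}_j^*]+w_L[-({\mathfrak a}_L^*{\mathfrak a}_1+{\mathfrak a}_1^*{\mathfrak a}_L)+e^{i\theta}{\mathfrak a}_L{\mathfrak a}_1+e^{-i\theta}{\mathfrak a}_1^*{\mathfrak a}_L^*]$ with site-dependent couplings. The spectral gap above the ground state energy is the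 distance between the lowest eigenvalue and the next distinct eigenvalue. *)

theory Defs
  imports "Jordan_Normal_Form.Schur_Decomposition"
begin

text \<open>Fock space F(C^L) realised as C^(2^L): basis vector n < 2^L is the occupation
  state whose set of occupied sites is {j \<in> {1..L}. bit n (j-1)}.\<close>

definition annih :: "nat \<Rightarrow> nat \<Rightarrow> complex mat" where
  "annih L j = mat (2^L) (2^L) (\<lambda>(r, c).
     if bit c (j - 1) \<and> r = c - 2^(j - 1)
     then (-1) ^ card {k. k < j - 1 \<and> bit c k} else 0)"

definition creat :: "nat \<Rightarrow> nat \<Rightarrow> complex mat" where
  "creat L j = mat_adjoint (annih L j)"

definition majorana :: "real \<Rightarrow> nat \<Rightarrow> nat \<Rightarrow> complex mat" where
  "majorana \<theta> L k =
    (let j = (k + 1) div 2;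
         e = cis (\<theta> / 2); e' = cis (- \<theta> / 2)
     in if odd k then e \<cdot>\<^sub>m annih L j + e' \<cdot>\<^sub>m creat L j
        else (- \<i> * e) \<cdot>\<^sub>m annih L j + (\<i> * e') \<cdot>\<^sub>m creat L j)"

definition mat_sum :: "nat \<Rightarrow> (nat \<Rightarrow> complex mat) \<Rightarrow> nat list \<Rightarrow> complex mat" where
  "mat_sum n f xs = foldr (\<lambda>j acc. f j + acc) xs (0\<^sub>m n n)"

definition kitaev_H :: "real \<Rightarrow> nat \<Rightarrow> (nat \<Rightarrow> real) \<Rightarrow> complex mat" where
  "kitaev_H \<theta> L w =
     mat_sum (2^L) (\<lambda>j. (complex_of_real (w j) * \<i>) \<cdot>\<^sub>m
                         (majorana \<theta> L (2*j) * majorana \<theta> L (2*j + 1))) [1..<L]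
     + (complex_of_real (w L) * \<i>) \<cdot>\<^sub>m (majorana \<theta> L (2*L) * majorana \<theta> L 1)"

definition real_spec :: "complex mat \<Rightarrow> real set" where
  "real_spec H = {x. eigenvalue H (complex_of_real x)}"

definition ground_energy :: "complex mat \<Rightarrow> real" where
  "ground_energy H = Min (real_spec H)"

definition spectral_gap :: "complex mat \<Rightarrow> real" where
  "spectral_gap H = Min (real_spec H - {ground_energy H}) - ground_energy H"

end

theory Submission
  imports Defs
begin


definition monomat :: "nat \<Rightarrow> (nat \<Rightarrow> nat) \<Rightarrow> (nat \<Rightarrow> complex) \<Rightarrow> complex mat" where
  "monomat N f g = mat N N (\<lambda>(r, c). if r = f c then g c else 0)"

lemma mono_carrier[simp]: "monomat N f g \<in> carrier_mat N N"
  by (simp add: monomat_def)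

lemma mono_index: "r < N \<Longrightarrow> c < N \<Longrightarrow> monomat N f g $$ (r, c) = (if r = f c then g c else 0)"
  unfolding monomat_def by (simp only: index_mat prod.case)

lemma mono_dims[simp]: "dim_row (monomat N f g) = N" "dim_col (monomat N f g) = N"
  unfolding monomat_def by (simp_all only: dim_row_mat dim_col_mat)

lemma mono_mult:
  assumes "\<And>c. c < N \<Longrightarrow> f2 c < N"
  shows "monomat N f1 g1 * monomat N f2 g2 = monomat N (\<lambda>c. f1 (f2 c)) (\<lambda>c. g1 (f2 c) * g2 c)"
proof (rule eq_matI)
  fix r c assume rc: "r < dim_row (monomat N (\<lambda>c. f1 (f2 c)) (\<lambda>c. g1 (f2 c) * g2 c))"
     "c < dim_col (monomat N (\<lambda>c. f1 (f2 c)) (\<lambda>c. g1 (f2 c) * g2 c))"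
  hence r: "r < N" and c: "c < N" by (auto simp: monomat_def)
  have "(monomat N f1 g1 * monomat N f2 g2) $$ (r, c) =
     (\<Sum>m\<in>{0..<N}. (if r = f1 m then g1 m else 0) * (if m = f2 c then g2 c else 0))"
    using r c by (simp add: monomat_def scalar_prod_def)
  also have "\<dots> = (\<Sum>m\<in>{0..<N}. if m = f2 c then (if r = f1 (f2 c) then g1 (f2 c) * g2 c else 0) else 0)"
    by (rule sum.cong) auto
  also have "\<dots> = (if r = f1 (f2 c) then g1 (f2 c) * g2 c else 0)"
    using assms[OF c] by simp
  finally show "(monomat N f1 g1 * monomat N f2 g2) $$ (r, c) = monomat N (\<lambda>c. f1 (f2 c)) (\<lambda>c. g1 (f2 c) * g2 c) $$ (r, c)"
    using r c by (simp add: monomat_def)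
qed (auto simp: monomat_def)

lemma mono_add: "monomat N f g1 + monomat N f g2 = monomat N f (\<lambda>c. g1 c + g2 c)"
  by (rule eq_matI) (auto simp: monomat_def)

lemma mono_smult: "a \<cdot>\<^sub>m monomat N f g = monomat N f (\<lambda>c. a * g c)"
  by (rule eq_matI) (auto simp: monomat_def)

lemma mono_one: "(\<And>c. c < N \<Longrightarrow> g c = 1) \<Longrightarrow> monomat N (\<lambda>c. c) g = 1\<^sub>m N"
  by (rule eq_matI) (auto simp: monomat_def)

lemma mono_cong: "(\<And>c. c < N \<Longrightarrow> f c = f' c) \<Longrightarrow> (\<And>c. c < N \<Longrightarrow> g c = g' c) \<Longrightarrow> monomat N f g = monomat N f' g'"
  by (rule eq_matI) (auto simp: monomat_def)

lemma flip_flip[simp]: "flip_bit i (flip_bit i (c::nat)) = c"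
  by (rule bit_eqI) (auto simp: bit_flip_bit_iff)

lemma flip_comm: "flip_bit i (flip_bit j (c::nat)) = flip_bit j (flip_bit i c)"
  by (rule bit_eqI) (auto simp: bit_flip_bit_iff)

lemma flip_lt: assumes "(c::nat) < 2^L" "i < L" shows "flip_bit i c < 2^L"
proof -
  have "take_bit L (flip_bit i c) = flip_bit i (take_bit L c)"
    using assms by (simp add: take_bit_flip_bit_eq)
  also have "\<dots> = flip_bit i c" using assms take_bit_nat_eq_self_iff[of L c] by simp
  finally show ?thesis by (simp add: take_bit_nat_eq_self_iff)
qed

lemma flip_set: "\<not> bit (c::nat) i \<Longrightarrow> flip_bit i c = c + 2^i"
  by (simp add: flip_bit_eq_if set_bit_eq)

lemma flip_unset: assumes "bit (c::nat) i" shows "flip_bit i c = c - 2^i"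
proof -
  have "\<not> bit (flip_bit i c) i" using assms by (simp add: bit_flip_bit_iff)
  hence "flip_bit i (flip_bit i c) = flip_bit i c + 2^i" by (rule flip_set)
  thus ?thesis by simp
qed

lemma cond_annih: "(bit (c::nat) i \<and> r = c - 2^i) \<longleftrightarrow> (bit c i \<and> r = flip_bit i c)"
  using flip_unset by auto

lemma cond_creat: "(bit (r::nat) i \<and> c = r - 2^i) \<longleftrightarrow> (\<not> bit c i \<and> r = flip_bit i c)"
proof
  assume h: "bit r i \<and> c = r - 2^i"
  hence "c = flip_bit i r" using flip_unset by auto
  thus "\<not> bit c i \<and> r = flip_bit i c" using h by (auto simp: bit_flip_bit_iff)
next
  assume h: "\<not> bit c i \<and> r = flip_bit i c"
  hence "r = c + 2^i" using flip_set by auto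
  moreover have "bit r i" using h by (simp add: bit_flip_bit_iff)
  ultimately show "bit r i \<and> c = r - 2^i" by simp
qed

definition sg :: "nat \<Rightarrow> nat \<Rightarrow> complex" where
  "sg i c = (-1) ^ card {k. k < i \<and> bit c k}"

lemma sg_flip_ge: "i \<le> m \<Longrightarrow> sg i (flip_bit m c) = sg i c"
proof -
  assume "i \<le> m"
  hence "{k. k < i \<and> bit (flip_bit m c) k} = {k. k < i \<and> bit c k}"
    by (auto simp: bit_flip_bit_iff)
  thus ?thesis by (simp add: sg_def)
qed

lemma sg_flip_lt: assumes "m < i" shows "sg i (flip_bit m c) = - sg i c"
proof (cases "bit c m")
  case True
  have "{k. k < i \<and> bit (flip_bit m c) k} = {k. k < i \<and> bit c k} - {m}"
    using True by (auto simp: bit_flip_bit_iff)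
  moreover have "m \<in> {k. k < i \<and> bit c k}" using True assms by auto
  moreover have "finite {k. k < i \<and> bit c k}" by simp
  ultimately have "card {k. k < i \<and> bit (flip_bit m c) k} + 1 = card {k. k < i \<and> bit c k}"
    by (metis Suc_eq_plus1 card.remove)
  hence "sg i c = (-1) * sg i (flip_bit m c)" unfolding sg_def by (metis power_Suc Suc_eq_plus1)
  thus ?thesis by simp
next
  case False
  have "{k. k < i \<and> bit (flip_bit m c) k} = insert m {k. k < i \<and> bit c k}"
    apply (rule Set.set_eqI)
    subgoal for x using assms False by (cases "x = m") (auto simp: bit_flip_bit_iff)
    done
  moreover have "m \<notin> {k. k < i \<and> bit c k}" using False by auto
  moreover have "finite {k. k < i \<and> bit c k}" by simp
  ultimately have "card {k. k < i \<and> bit (flip_bit m c) k} = Suc (card {k. k < i \<and> bit c k})"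
    by simp
  thus ?thesis unfolding sg_def by simp
qed

lemma sg_sq: "sg i c * sg i c = 1"
  unfolding sg_def by (simp add: power_mult_distrib[symmetric])

lemma adj_index: "i < dim_col A \<Longrightarrow> j < dim_row A \<Longrightarrow> mat_adjoint A $$ (i,j) = conjugate (A $$ (j,i))"
  unfolding mat_adjoint_def mat_of_rows_def by simp

lemma adj_dims[simp]: "dim_row (mat_adjoint A) = dim_col A" "dim_col (mat_adjoint A) = dim_row A"
  unfolding mat_adjoint_def by simp_all

lemma annih_dim[simp]: "annih L j \<in> carrier_mat (2^L) (2^L)"
  unfolding annih_def by (rule mat_carrier)

lemma annih_index: "r < 2^L \<Longrightarrow> c < 2^L \<Longrightarrow> annih L j $$ (r, c) =
     (if bit c (j - 1) \<and> r = c - 2^(j - 1) then (-1) ^ card {k. k < j - 1 \<and> bit c k} else 0)"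
  unfolding annih_def by (simp only: index_mat prod.case)

lemma creat_index:
  assumes "r < 2^L" "c < 2^L"
  shows "creat L j $$ (r, c) = cnj (annih L j $$ (c, r))"
  using assms adj_index[of r "annih L j" c] annih_dim[of L j] unfolding creat_def carrier_mat_def
  by (simp del: annih_dim)

lemma creat_dim[simp]: "creat L j \<in> carrier_mat (2^L) (2^L)"
  using annih_dim[of L j] unfolding creat_def carrier_mat_def by (simp del: annih_dim)

definition site :: "nat \<Rightarrow> nat" where "site p = (p + 1) div 2 - 1"

definition ph :: "real \<Rightarrow> nat \<Rightarrow> bool \<Rightarrow> complex" where
  "ph \<theta> p \<beta> = (if odd p then (if \<beta> then cis (\<theta>/2) else cis (-\<theta>/2))
      else (if \<beta> then - \<i> * cis (\<theta>/2) else \<i> * cis (-\<theta>/2)))"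

definition Gm :: "real \<Rightarrow> nat \<Rightarrow> nat \<Rightarrow> complex" where
  "Gm \<theta> p c = sg (site p) c * ph \<theta> p (bit c (site p))"

lemma annih_entry: "r < 2^L \<Longrightarrow> c < 2^L \<Longrightarrow> annih L j $$ (r, c) =
   (if bit c (j - 1) \<and> r = flip_bit (j - 1) c then sg (j - 1) c else 0)"
  unfolding annih_index sg_def using cond_annih by simp

lemma creat_entry: "r < 2^L \<Longrightarrow> c < 2^L \<Longrightarrow> creat L j $$ (r, c) =
   (if \<not> bit c (j - 1) \<and> r = flip_bit (j - 1) c then sg (j - 1) c else 0)"
proof -
  assume rc: "r < 2^L" "c < 2^L"
  have "creat L j $$ (r, c) = cnj (if bit r (j - 1) \<and> c = r - 2^(j-1) then sg (j - 1) r else 0)"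
    using rc by (simp add: creat_index annih_index sg_def)
  also have "\<dots> = (if \<not> bit c (j - 1) \<and> r = flip_bit (j - 1) c then sg (j - 1) r else 0)"
    using cond_creat[of r "j-1" c] by (simp add: sg_def)
  also have "\<dots> = (if \<not> bit c (j - 1) \<and> r = flip_bit (j - 1) c then sg (j - 1) c else 0)"
    using sg_flip_ge[of "j-1" "j-1" c] by auto
  finally show ?thesis .
qed

lemma maj_carrier[simp]: "majorana \<theta> L p \<in> carrier_mat (2^L) (2^L)"
  unfolding majorana_def Let_def using annih_dim creat_dim by simp

lemma maj_mono:
  assumes "1 \<le> p" "p \<le> 2*L"
  shows "majorana \<theta> L p = monomat (2^L) (flip_bit (site p)) (Gm \<theta> p)"
proof -
  have dr: "dim_row (majorana \<theta> L p) = dim_row (monomat (2^L) (flip_bit (site p)) (Gm \<theta> p))"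
    using carrier_matD[OF maj_carrier[of \<theta> L p]] carrier_matD[OF mono_carrier] by simp
  have dc: "dim_col (majorana \<theta> L p) = dim_col (monomat (2^L) (flip_bit (site p)) (Gm \<theta> p))"
    using carrier_matD[OF maj_carrier[of \<theta> L p]] carrier_matD[OF mono_carrier] by simp
  show ?thesis
proof (rule eq_matI)
  fix r c assume "r < dim_row (monomat (2^L) (flip_bit (site p)) (Gm \<theta> p))"
    "c < dim_col (monomat (2^L) (flip_bit (site p)) (Gm \<theta> p))"
  hence rc: "r < 2^L" "c < 2^L" using carrier_matD[OF mono_carrier] by simp_all
  define i where "i = site p"
  have ij: "(p + 1) div 2 - 1 = i" by (simp add: i_def site_def)
  have A: "annih L ((p + 1) div 2) $$ (r, c) = (if bit c i \<and> r = flip_bit i c then sg i c else 0)"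
    using annih_entry[OF rc, of "(p + 1) div 2"] unfolding ij .
  have C: "creat L ((p + 1) div 2) $$ (r, c) = (if \<not> bit c i \<and> r = flip_bit i c then sg i c else 0)"
    using creat_entry[OF rc, of "(p + 1) div 2"] unfolding ij .
  have "majorana \<theta> L p $$ (r, c) = (if odd p then cis (\<theta>/2) * annih L ((p + 1) div 2) $$ (r, c) + cis (-\<theta>/2) * creat L ((p + 1) div 2) $$ (r, c)
     else (- \<i> * cis (\<theta>/2)) * annih L ((p + 1) div 2) $$ (r, c) + (\<i> * cis (-\<theta>/2)) * creat L ((p + 1) div 2) $$ (r, c))"
  proof (cases "odd p")
    case True
    have "majorana \<theta> L p = cis (\<theta>/2) \<cdot>\<^sub>m annih L ((p + 1) div 2) + cis (-\<theta>/2) \<cdot>\<^sub>m creat L ((p + 1) div 2)"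
      unfolding majorana_def Let_def using True by (rule if_P)
    thus ?thesis using True rc carrier_matD[OF annih_dim] carrier_matD[OF creat_dim] by simp
  next
    case False
    have "majorana \<theta> L p = (- \<i> * cis (\<theta>/2)) \<cdot>\<^sub>m annih L ((p + 1) div 2) + (\<i> * cis (-\<theta>/2)) \<cdot>\<^sub>m creat L ((p + 1) div 2)"
      unfolding majorana_def Let_def using False by (rule if_not_P)
    thus ?thesis using False rc carrier_matD[OF annih_dim] carrier_matD[OF creat_dim] by simp
  qed
  also have "\<dots> = monomat (2^L) (flip_bit (site p)) (Gm \<theta> p) $$ (r, c)"
    unfolding A C mono_index[OF rc] Gm_def ph_def i_def[symmetric]
    by (cases "odd p"; cases "bit c i"; cases "r = flip_bit i c") simp_all
  finally show "majorana \<theta> L p $$ (r, c) = monomat (2^L) (flip_bit (site p)) (Gm \<theta> p) $$ (r, c)" .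
qed (rule dr, rule dc)
qed

lemma site_lt: "1 \<le> p \<Longrightarrow> p \<le> 2*L \<Longrightarrow> site p < L"
  unfolding site_def by linarith

lemma Gm_flip_other:
  assumes "site p \<noteq> b"
  shows "Gm \<theta> p (flip_bit b c) = (if b < site p then -1 else 1) * Gm \<theta> p c"
proof -
  have "bit (flip_bit b c) (site p) = bit c (site p)" using assms by (auto simp: bit_flip_bit_iff)
  thus ?thesis using assms sg_flip_ge[of "site p" b c] sg_flip_lt[of b "site p" c]
    unfolding Gm_def by auto
qed

lemma Gm_flip_same:
  "Gm \<theta> p (flip_bit (site p) c) = sg (site p) c * ph \<theta> p (\<not> bit c (site p))"
  unfolding Gm_def using sg_flip_ge[of "site p" "site p" c] by (simp add: bit_flip_bit_iff)

lemma cis_half: "cis (\<theta>/2) * cis (-\<theta>/2) = 1"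
  by (simp add: cis_mult)

lemma ph_same: "ph \<theta> p (\<not> \<beta>) * ph \<theta> p \<beta> = 1"
proof -
  have "ph \<theta> p (\<not> \<beta>) * ph \<theta> p \<beta> = cis (\<theta>/2) * cis (-\<theta>/2)"
    unfolding ph_def by (cases \<beta>; cases "odd p") (simp_all add: algebra_simps)
  thus ?thesis using cis_half by simp
qed

lemma ph_diff: "odd p \<noteq> odd q \<Longrightarrow> ph \<theta> p (\<not> \<beta>) * ph \<theta> q \<beta> = - (ph \<theta> q (\<not> \<beta>) * ph \<theta> p \<beta>)"
proof -
  assume h: "odd p \<noteq> odd q"
  have e: "cis (-\<theta>/2) * cis (\<theta>/2) = 1" using cis_half[of \<theta>] by (simp add: mult.commute)
  show ?thesis using h unfolding ph_def
    by (cases \<beta>; cases "odd p") (simp_all add: algebra_simps e cis_half)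
qed

lemma maj_sq:
  assumes "1 \<le> p" "p \<le> 2*L"
  shows "majorana \<theta> L p * majorana \<theta> L p = 1\<^sub>m (2^L)"
proof -
  have "majorana \<theta> L p * majorana \<theta> L p =
     monomat (2^L) (\<lambda>c. flip_bit (site p) (flip_bit (site p) c)) (\<lambda>c. Gm \<theta> p (flip_bit (site p) c) * Gm \<theta> p c)"
    unfolding maj_mono[OF assms] using flip_lt site_lt[OF assms] by (intro mono_mult) auto
  also have "\<dots> = 1\<^sub>m (2^L)"
  proof -
    have "Gm \<theta> p (flip_bit (site p) c) * Gm \<theta> p c = 1" for c
    proof -
      have "Gm \<theta> p (flip_bit (site p) c) * Gm \<theta> p c =
        (sg (site p) c * sg (site p) c) * (ph \<theta> p (\<not> bit c (site p)) * ph \<theta> p (bit c (site p)))"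
        unfolding Gm_flip_same by (simp add: Gm_def algebra_simps)
      thus ?thesis by (simp add: sg_sq ph_same)
    qed
    thus ?thesis by (simp add: mono_one)
  qed
  finally show ?thesis .
qed

lemma maj_anti:
  assumes "1 \<le> p" "p \<le> 2*L" "1 \<le> q" "q \<le> 2*L" "p \<noteq> q"
  shows "majorana \<theta> L p * majorana \<theta> L q = (-1) \<cdot>\<^sub>m (majorana \<theta> L q * majorana \<theta> L p)"
proof -
  let ?a = "site p" and ?b = "site q"
  have e1: "majorana \<theta> L p * majorana \<theta> L q =
     monomat (2^L) (\<lambda>c. flip_bit ?a (flip_bit ?b c)) (\<lambda>c. Gm \<theta> p (flip_bit ?b c) * Gm \<theta> q c)"
    unfolding maj_mono[OF assms(1,2)] maj_mono[OF assms(3,4)] using flip_lt site_lt[OF assms(3,4)]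
    by (intro mono_mult) auto
  have e2: "majorana \<theta> L q * majorana \<theta> L p =
     monomat (2^L) (\<lambda>c. flip_bit ?b (flip_bit ?a c)) (\<lambda>c. Gm \<theta> q (flip_bit ?a c) * Gm \<theta> p c)"
    unfolding maj_mono[OF assms(1,2)] maj_mono[OF assms(3,4)] using flip_lt site_lt[OF assms(1,2)]
    by (intro mono_mult) auto
  have key: "Gm \<theta> p (flip_bit ?b c) * Gm \<theta> q c = - (Gm \<theta> q (flip_bit ?a c) * Gm \<theta> p c)" for c
  proof (cases "?a = ?b")
    case True
    have par: "odd p \<noteq> odd q" using True assms(5) assms(1) assms(3) unfolding site_def
      by presburger
    have "Gm \<theta> p (flip_bit ?b c) * Gm \<theta> q c =
        (sg ?a c * sg ?a c) * (ph \<theta> p (\<not> bit c ?a) * ph \<theta> q (bit c ?a))"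
      unfolding True[symmetric] Gm_flip_same unfolding Gm_def True by (simp add: algebra_simps)
    moreover have "Gm \<theta> q (flip_bit ?a c) * Gm \<theta> p c =
        (sg ?a c * sg ?a c) * (ph \<theta> q (\<not> bit c ?a) * ph \<theta> p (bit c ?a))"
      unfolding True Gm_flip_same unfolding Gm_def True by (simp add: algebra_simps)
    ultimately show ?thesis using ph_diff[OF par] by simp
  next
    case False
    show ?thesis using False unfolding Gm_flip_other[OF False] Gm_flip_other[OF False[symmetric]]
      by auto
  qed
  show ?thesis unfolding e1 e2 mono_smult
    by (rule mono_cong) (simp_all add: flip_comm key)
qed



lemma smult_mat_vec_assoc: "M \<in> carrier_mat n n \<Longrightarrow> v \<in> carrier_vec n \<Longrightarrow>
   (a \<cdot>\<^sub>m M) *\<^sub>v v = (a::complex) \<cdot>\<^sub>v (M *\<^sub>v v)"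
  by (rule eq_vecI) (auto simp: scalar_prod_def sum_distrib_left algebra_simps)

lemma vec_eq_comp: "x \<in> carrier_vec n \<Longrightarrow> y \<in> carrier_vec n \<Longrightarrow> (\<And>i. i < n \<Longrightarrow> x $ i = y $ i) \<Longrightarrow> x = y"
  by (rule eq_vecI) auto

lemma smult_nonzero_eq:
  assumes "v \<in> carrier_vec n" "v \<noteq> 0\<^sub>v n" "a \<cdot>\<^sub>v v = b \<cdot>\<^sub>v v"
  shows "(a::complex) = b"
proof -
  obtain i where i: "i < n" "v $ i \<noteq> 0" using assms(1,2) by (metis eq_vecI carrier_vecD index_zero_vec(1,2))
  have "(a \<cdot>\<^sub>v v) $ i = (b \<cdot>\<^sub>v v) $ i" using assms(3) by simp
  hence "a * v $ i = b * v $ i" using i assms(1) by simp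
  thus ?thesis using i by simp
qed

lemma mat_sum_Cons: "mat_sum N f (j # js) = f j + mat_sum N f js"
  by (simp add: mat_sum_def)

lemma mat_sum_Nil: "mat_sum N f [] = 0\<^sub>m N N"
  by (simp add: mat_sum_def)

lemma mat_sum_carrier: "(\<And>j. j \<in> set js \<Longrightarrow> f j \<in> carrier_mat N N) \<Longrightarrow> mat_sum N f js \<in> carrier_mat N N"
  by (induction js) (auto simp: mat_sum_Cons mat_sum_Nil)

lemma mat_sum_snoc:
  assumes "\<And>j. j \<in> set xs \<Longrightarrow> f j \<in> carrier_mat N N" "f x \<in> carrier_mat N N"
  shows "mat_sum N f (xs @ [x]) = mat_sum N f xs + f x"
  using assms
proof (induction xs)
  case Nil thus ?case by (simp add: mat_sum_Cons mat_sum_Nil)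
next
  case (Cons y xs)
  have c: "mat_sum N f xs \<in> carrier_mat N N" using Cons.prems by (intro mat_sum_carrier) auto
  have "mat_sum N f ((y # xs) @ [x]) = f y + (mat_sum N f xs + f x)"
    using Cons by (simp add: mat_sum_Cons)
  also have "\<dots> = (f y + mat_sum N f xs) + f x"
    using assoc_add_mat[of "f y" N N "mat_sum N f xs" "f x"] c Cons.prems by simp
  finally show ?case by (simp add: mat_sum_Cons)
qed

lemma mat_sum_cong: "(\<And>j. j \<in> set js \<Longrightarrow> f j = g j) \<Longrightarrow> mat_sum N f js = mat_sum N g js"
  by (induction js) (auto simp: mat_sum_Cons mat_sum_Nil)

locale cinv =
  fixes N :: nat and A :: "nat \<Rightarrow> complex mat" and J :: "nat set"
  assumes carr: "j \<in> J \<Longrightarrow> A j \<in> carrier_mat N N"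
    and sq: "j \<in> J \<Longrightarrow> A j * A j = 1\<^sub>m N"
    and comm: "j \<in> J \<Longrightarrow> k \<in> J \<Longrightarrow> A j * A k = A k * A j"
begin

lemma carrs[simp]: "j \<in> J \<Longrightarrow> A j \<in> carrier_mat N N" by (rule carr)

lemma Av_carrier[simp]: "j \<in> J \<Longrightarrow> v \<in> carrier_vec N \<Longrightarrow> A j *\<^sub>v v \<in> carrier_vec N"
  by (rule mult_mat_vec_carrier[OF carr])

lemma dimsA[simp]: "j \<in> J \<Longrightarrow> dim_row (A j) = N" "j \<in> J \<Longrightarrow> dim_col (A j) = N"
  using carrier_matD[OF carr] by auto

definition Hs :: "(nat \<Rightarrow> real) \<Rightarrow> nat list \<Rightarrow> complex mat" where
  "Hs w js = mat_sum N (\<lambda>j. complex_of_real (w j) \<cdot>\<^sub>m A j) js"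

lemma Hs_carrier: "set js \<subseteq> J \<Longrightarrow> Hs w js \<in> carrier_mat N N"
  unfolding Hs_def by (rule mat_sum_carrier, rule smult_carrier_mat, rule carr) auto

lemma Hs_comm: "set js \<subseteq> J \<Longrightarrow> k \<in> J \<Longrightarrow> A k * Hs w js = Hs w js * A k"
proof (induction js)
  case Nil thus ?case using carr[of k] by (simp add: Hs_def mat_sum_Nil)
next
  case (Cons j js)
  have cj: "A j \<in> carrier_mat N N" and ck: "A k \<in> carrier_mat N N" using Cons.prems carr by auto
  have ch: "Hs w js \<in> carrier_mat N N" using Cons.prems by (intro Hs_carrier) auto
  have csj: "complex_of_real (w j) \<cdot>\<^sub>m A j \<in> carrier_mat N N" using cj by simp
  have "A k * Hs w (j # js) = A k * (complex_of_real (w j) \<cdot>\<^sub>m A j) + A k * Hs w js"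
    unfolding Hs_def mat_sum_Cons unfolding Hs_def[symmetric]
    using mult_add_distrib_mat[OF ck csj ch] by simp
  also have "\<dots> = complex_of_real (w j) \<cdot>\<^sub>m (A k * A j) + Hs w js * A k"
    using Cons mult_smult_distrib[OF ck cj] by simp
  also have "\<dots> = complex_of_real (w j) \<cdot>\<^sub>m (A j * A k) + Hs w js * A k"
    using comm[of k j] Cons.prems by simp
  also have "\<dots> = Hs w (j # js) * A k"
    unfolding Hs_def mat_sum_Cons unfolding Hs_def[symmetric]
    using add_mult_distrib_mat[OF csj ch ck] mult_smult_assoc_mat[OF cj ck] by simp
  finally show ?case .
qed

lemma Hs_cons_apply:
  assumes "set (j # js) \<subseteq> J" "v \<in> carrier_vec N"
  shows "Hs w (j # js) *\<^sub>v v = complex_of_real (w j) \<cdot>\<^sub>v (A j *\<^sub>v v) + Hs w js *\<^sub>v v"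
proof -
  have cj: "A j \<in> carrier_mat N N" using assms carr by auto
  have ch: "Hs w js \<in> carrier_mat N N" using assms by (intro Hs_carrier) auto
  have csj: "complex_of_real (w j) \<cdot>\<^sub>m A j \<in> carrier_mat N N" using cj by simp
  show ?thesis unfolding Hs_def mat_sum_Cons unfolding Hs_def[symmetric]
    using add_mult_distrib_mat_vec[OF csj ch assms(2)] smult_mat_vec_assoc[OF cj assms(2)] by simp
qed

definition u :: "nat \<Rightarrow> complex \<Rightarrow> complex vec \<Rightarrow> complex vec" where
  "u j \<sigma> v = (1/2) \<cdot>\<^sub>v (v + \<sigma> \<cdot>\<^sub>v (A j *\<^sub>v v))"

lemma u_carrier: "j \<in> J \<Longrightarrow> v \<in> carrier_vec N \<Longrightarrow> u j \<sigma> v \<in> carrier_vec N"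
proof -
  assume a: "j \<in> J" "v \<in> carrier_vec N"
  hence "A j *\<^sub>v v \<in> carrier_vec N" using carr[OF a(1)] by simp
  thus ?thesis unfolding u_def using a by simp
qed

lemma u_sum: "j \<in> J \<Longrightarrow> v \<in> carrier_vec N \<Longrightarrow> u j 1 v + u j (-1) v = v"
  by (rule vec_eq_comp[of _ N]) (auto simp: u_def u_carrier field_simps)

lemma u_nonzero:
  assumes "j \<in> J" "v \<in> carrier_vec N" "v \<noteq> 0\<^sub>v N"
  shows "\<exists>\<sigma>::real. (\<sigma> = 1 \<or> \<sigma> = -1) \<and> u j (complex_of_real \<sigma>) v \<noteq> 0\<^sub>v N"
proof (rule ccontr)
  assume "\<not> ?thesis"
  hence "u j (complex_of_real 1) v = 0\<^sub>v N" "u j (complex_of_real (-1)) v = 0\<^sub>v N" by auto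
  hence "u j 1 v = 0\<^sub>v N" "u j (-1) v = 0\<^sub>v N" by simp_all
  hence "v = 0\<^sub>v N + 0\<^sub>v N" using u_sum[OF assms(1,2)] by metis
  thus False using assms(3) by simp
qed

lemma A_u:
  assumes "j \<in> J" "v \<in> carrier_vec N" "\<sigma> * \<sigma> = 1"
  shows "A j *\<^sub>v u j \<sigma> v = \<sigma> \<cdot>\<^sub>v u j \<sigma> v"
proof -
  have cj: "A j \<in> carrier_mat N N" using assms carr by auto
  have "A j *\<^sub>v u j \<sigma> v = (1/2) \<cdot>\<^sub>v (A j *\<^sub>v v + \<sigma> \<cdot>\<^sub>v ((A j * A j) *\<^sub>v v))"
    unfolding u_def using cj assms(2)
    by (simp add: mult_mat_vec mult_add_distrib_mat_vec)
  also have "\<dots> = (1/2) \<cdot>\<^sub>v (A j *\<^sub>v v + \<sigma> \<cdot>\<^sub>v v)" using sq[OF assms(1)] assms(2) by simp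
  also have "\<dots> = \<sigma> \<cdot>\<^sub>v u j \<sigma> v"
    unfolding u_def using cj assms
    by (intro vec_eq_comp[of _ N]) (auto simp: algebra_simps)
  finally show ?thesis .
qed

lemma M_u:
  assumes "j \<in> J" "v \<in> carrier_vec N" "M \<in> carrier_mat N N" "M * A j = A j * M"
    "M *\<^sub>v v = \<mu> \<cdot>\<^sub>v v"
  shows "M *\<^sub>v u j \<sigma> v = \<mu> \<cdot>\<^sub>v u j \<sigma> v"
proof -
  have cj: "A j \<in> carrier_mat N N" using assms carr by auto
  have "M *\<^sub>v u j \<sigma> v = (1/2) \<cdot>\<^sub>v (M *\<^sub>v v + \<sigma> \<cdot>\<^sub>v ((M * A j) *\<^sub>v v))"
    unfolding u_def using cj assms(2,3)
    by (simp add: mult_mat_vec mult_add_distrib_mat_vec)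
  also have "\<dots> = (1/2) \<cdot>\<^sub>v (\<mu> \<cdot>\<^sub>v v + \<sigma> \<cdot>\<^sub>v (\<mu> \<cdot>\<^sub>v (A j *\<^sub>v v)))"
    unfolding assms(4) using cj assms(2,3,5) by (simp add: mult_mat_vec)
  also have "\<dots> = \<mu> \<cdot>\<^sub>v u j \<sigma> v"
    unfolding u_def using cj assms
    by (intro vec_eq_comp[of _ N]) (auto simp: algebra_simps)
  finally show ?thesis .
qed

lemma eig_vals:
  assumes "set js \<subseteq> J" "distinct js" "v \<in> carrier_vec N" "v \<noteq> 0\<^sub>v N" "Hs w js *\<^sub>v v = \<mu> \<cdot>\<^sub>v v"
  shows "\<exists>s. (\<forall>j. s j = 1 \<or> s j = -1) \<and> \<mu> = complex_of_real (\<Sum>j\<in>set js. w j * s j)"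
  using assms
proof (induction js arbitrary: v \<mu>)
  case Nil
  have z: "0\<^sub>m N N *\<^sub>v v = 0 \<cdot>\<^sub>v v" using Nil.prems mult_mat_vec_carrier[OF zero_carrier_mat, of v N N]
    by (intro vec_eq_comp[of _ N]) (auto simp: scalar_prod_def)
  have "\<mu> \<cdot>\<^sub>v v = 0 \<cdot>\<^sub>v v" using Nil.prems(5) z by (simp add: Hs_def mat_sum_Nil)
  hence "\<mu> = 0" using smult_nonzero_eq[OF Nil.prems(3,4)] by simp
  thus ?case by (intro exI[of _ "\<lambda>_. 1"]) simp
next
  case (Cons j js)
  have jJ: "j \<in> J" and jsJ: "set js \<subseteq> J" using Cons.prems by auto
  have cj: "A j \<in> carrier_mat N N" using jJ carr by auto
  have ch: "Hs w js \<in> carrier_mat N N" using jsJ by (rule Hs_carrier)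
  have chh: "Hs w (j # js) \<in> carrier_mat N N" using Cons.prems(1) by (rule Hs_carrier)
  have jn: "j \<notin> set js" and dist: "distinct js" using Cons.prems(2) by auto
  have vc: "v \<in> carrier_vec N" and vnz: "v \<noteq> 0\<^sub>v N" using Cons.prems by auto
  obtain \<sigma> :: real where \<sigma>: "\<sigma> = 1 \<or> \<sigma> = -1" and nz: "u j (complex_of_real \<sigma>) v \<noteq> 0\<^sub>v N"
    using u_nonzero[OF jJ vc vnz] by blast
  define uu where "uu = u j (complex_of_real \<sigma>) v"
  have uc: "uu \<in> carrier_vec N" unfolding uu_def using jJ vc by (rule u_carrier)
  have ss: "complex_of_real \<sigma> * complex_of_real \<sigma> = 1" using \<sigma> by auto
  have Au: "A j *\<^sub>v uu = complex_of_real \<sigma> \<cdot>\<^sub>v uu" unfolding uu_def using A_u[OF jJ vc ss] .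
  have Hu: "Hs w (j # js) *\<^sub>v uu = \<mu> \<cdot>\<^sub>v uu" unfolding uu_def
    using M_u[OF jJ vc chh Hs_comm[OF Cons.prems(1) jJ, symmetric] Cons.prems(5)] .
  have eq: "\<mu> \<cdot>\<^sub>v uu = complex_of_real (w j) \<cdot>\<^sub>v (complex_of_real \<sigma> \<cdot>\<^sub>v uu) + Hs w js *\<^sub>v uu"
    using Hs_cons_apply[OF Cons.prems(1) uc] Hu Au by simp
  have dH: "dim_row (Hs w js) = N" using ch by auto
  have H'u: "Hs w js *\<^sub>v uu = (\<mu> - complex_of_real (w j * \<sigma>)) \<cdot>\<^sub>v uu"
  proof (rule vec_eq_comp[of _ N])
    fix i assume i: "i < N"
    have "(\<mu> \<cdot>\<^sub>v uu) $ i = (complex_of_real (w j) \<cdot>\<^sub>v (complex_of_real \<sigma> \<cdot>\<^sub>v uu) + Hs w js *\<^sub>v uu) $ i"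
      using eq by simp
    hence "\<mu> * uu $ i = complex_of_real (w j) * (complex_of_real \<sigma> * uu $ i) + (Hs w js *\<^sub>v uu) $ i"
      using i uc dH by simp
    thus "(Hs w js *\<^sub>v uu) $ i = ((\<mu> - complex_of_real (w j * \<sigma>)) \<cdot>\<^sub>v uu) $ i"
      using i uc by (simp add: algebra_simps)
  qed (use uc ch in auto)
  obtain s where s: "\<forall>j. s j = 1 \<or> s j = -1" and
    sv: "\<mu> - complex_of_real (w j * \<sigma>) = complex_of_real (\<Sum>j\<in>set js. w j * s j)"
    using Cons.IH[OF jsJ dist uc nz[folded uu_def] H'u] by blast
  define s' where "s' = s(j := \<sigma>)"
  have "(\<Sum>k\<in>set (j # js). w k * s' k) = w j * \<sigma> + (\<Sum>k\<in>set js. w k * s' k)"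
    using jn by (simp add: s'_def)
  also have "(\<Sum>k\<in>set js. w k * s' k) = (\<Sum>k\<in>set js. w k * s k)"
    using jn by (intro sum.cong) (auto simp: s'_def)
  finally have "\<mu> = complex_of_real (\<Sum>k\<in>set (j # js). w k * s' k)"
    using sv by (simp only: of_real_add) (simp add: algebra_simps)
  moreover have "\<forall>k. s' k = 1 \<or> s' k = -1" using s \<sigma> by (simp add: s'_def)
  ultimately show ?case by blast
qed

lemma Hs_apply:
  assumes "set js \<subseteq> J" "distinct js" "v \<in> carrier_vec N"
    "\<forall>j\<in>set js. A j *\<^sub>v v = complex_of_real (s j) \<cdot>\<^sub>v v"
  shows "Hs w js *\<^sub>v v = complex_of_real (\<Sum>j\<in>set js. w j * s j) \<cdot>\<^sub>v v"
  using assms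
proof (induction js)
  case Nil
  show ?case using Nil.prems mult_mat_vec_carrier[OF zero_carrier_mat, of v N N]
    by (intro vec_eq_comp[of _ N]) (auto simp: scalar_prod_def Hs_def mat_sum_Nil)
next
  case (Cons j js)
  have jn: "j \<notin> set js" and dist: "distinct js" using Cons.prems(2) by auto
  have IH: "Hs w js *\<^sub>v v = complex_of_real (\<Sum>j\<in>set js. w j * s j) \<cdot>\<^sub>v v"
    using Cons by auto
  have "Hs w (j # js) *\<^sub>v v = complex_of_real (w j) \<cdot>\<^sub>v (complex_of_real (s j) \<cdot>\<^sub>v v)
      + complex_of_real (\<Sum>j\<in>set js. w j * s j) \<cdot>\<^sub>v v"
    using Hs_cons_apply[OF Cons.prems(1,3)] IH Cons.prems(4) by simp
  also have "\<dots> = complex_of_real (\<Sum>j\<in>set (j # js). w j * s j) \<cdot>\<^sub>v v"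
    using jn Cons.prems(3)
    by (intro vec_eq_comp[of _ N]) (auto simp: algebra_simps)
  finally show ?case .
qed

end

locale cinvF = cinv +
  fixes F :: "nat \<Rightarrow> complex mat"
  assumes Fcarr: "j \<in> J \<Longrightarrow> F j \<in> carrier_mat N N"
    and Fsq: "j \<in> J \<Longrightarrow> F j * F j = 1\<^sub>m N"
    and Fanti: "j \<in> J \<Longrightarrow> A j * F j = (-1) \<cdot>\<^sub>m (F j * A j)"
    and Fcomm: "j \<in> J \<Longrightarrow> k \<in> J \<Longrightarrow> k \<noteq> j \<Longrightarrow> F j * A k = A k * F j"
    and Npos: "N > 0"
begin

lemma joint:
  assumes "set js \<subseteq> J" "distinct js" "\<forall>j. s j = 1 \<or> s j = -1"
  shows "\<exists>v. v \<in> carrier_vec N \<and> v \<noteq> 0\<^sub>v N \<and> (\<forall>j\<in>set js. A j *\<^sub>v v = complex_of_real (s j) \<cdot>\<^sub>v v)"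
  using assms
proof (induction js)
  case Nil
  have "(unit_vec N 0 :: complex vec) \<noteq> 0\<^sub>v N"
  proof
    assume "(unit_vec N 0 :: complex vec) = 0\<^sub>v N"
    hence "(unit_vec N 0 :: complex vec) $ 0 = 0\<^sub>v N $ 0" by simp
    thus False using Npos by simp
  qed
  thus ?case by (intro exI[of _ "unit_vec N 0"]) simp
next
  case (Cons j js)
  have jJ: "j \<in> J" and jsJ: "set js \<subseteq> J" using Cons.prems by auto
  have jn: "j \<notin> set js" and dist: "distinct js" using Cons.prems(2) by auto
  obtain v where vc: "v \<in> carrier_vec N" and vnz: "v \<noteq> 0\<^sub>v N"
    and vA: "\<forall>k\<in>set js. A k *\<^sub>v v = complex_of_real (s k) \<cdot>\<^sub>v v"
    using Cons.IH[OF jsJ dist Cons.prems(3)] by blast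
  obtain \<sigma> :: real where \<sigma>: "\<sigma> = 1 \<or> \<sigma> = -1" and nz: "u j (complex_of_real \<sigma>) v \<noteq> 0\<^sub>v N"
    using u_nonzero[OF jJ vc vnz] by blast
  define uu where "uu = u j (complex_of_real \<sigma>) v"
  have uc: "uu \<in> carrier_vec N" unfolding uu_def using jJ vc by (rule u_carrier)
  have ss: "complex_of_real \<sigma> * complex_of_real \<sigma> = 1" using \<sigma> by auto
  have Au: "A j *\<^sub>v uu = complex_of_real \<sigma> \<cdot>\<^sub>v uu" unfolding uu_def using A_u[OF jJ vc ss] .
  have Aku: "A k *\<^sub>v uu = complex_of_real (s k) \<cdot>\<^sub>v uu" if k: "k \<in> set js" for k
  proof -
    have kJ: "k \<in> J" using k jsJ by auto
    show ?thesis unfolding uu_def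
      by (rule M_u[OF jJ vc carr[OF kJ] comm[OF kJ jJ]]) (use vA k in auto)
  qed
  have cF: "F j \<in> carrier_mat N N" using Fcarr[OF jJ] .
  show ?case
  proof (cases "\<sigma> = s j")
    case True
    thus ?thesis using uc nz Au Aku unfolding uu_def by auto
  next
    case False
    have "s j = 1 \<or> s j = -1" using Cons.prems(3) by blast
    hence sj: "s j = - \<sigma>" using \<sigma> False by auto
    define v' where "v' = F j *\<^sub>v uu"
    have v'c: "v' \<in> carrier_vec N" unfolding v'_def using cF uc by simp
    have "v' \<noteq> 0\<^sub>v N"
    proof
      assume h: "v' = 0\<^sub>v N"
      have "uu = (F j * F j) *\<^sub>v uu" using Fsq[OF jJ] uc by simp
      also have "\<dots> = F j *\<^sub>v 0\<^sub>v N" using cF uc h unfolding v'_def by simp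
      also have "\<dots> = 0\<^sub>v N" using cF by (intro vec_eq_comp[of _ N]) (auto simp: scalar_prod_def)
      finally show False using nz unfolding uu_def by simp
    qed
    moreover have "A j *\<^sub>v v' = complex_of_real (s j) \<cdot>\<^sub>v v'"
    proof -
      have "A j *\<^sub>v v' = (A j * F j) *\<^sub>v uu"
        unfolding v'_def using assoc_mult_mat_vec[OF carr[OF jJ] cF uc] by simp
      also have "\<dots> = ((-1) \<cdot>\<^sub>m (F j * A j)) *\<^sub>v uu" using Fanti[OF jJ] by simp
      also have "\<dots> = (-1) \<cdot>\<^sub>v (F j *\<^sub>v (complex_of_real \<sigma> \<cdot>\<^sub>v uu))"
        using smult_mat_vec_assoc[of "F j * A j" N uu "-1"] assoc_mult_mat_vec[OF cF carr[OF jJ] uc] cF uc jJ Au by simp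
      also have "\<dots> = complex_of_real (s j) \<cdot>\<^sub>v v'"
        unfolding v'_def sj using cF uc mult_mat_vec[OF cF uc]
        by (intro vec_eq_comp[of _ N]) auto
      finally show ?thesis .
    qed
    moreover have "A k *\<^sub>v v' = complex_of_real (s k) \<cdot>\<^sub>v v'" if k: "k \<in> set js" for k
    proof -
      have kJ: "k \<in> J" using k jsJ by auto
      have kj: "k \<noteq> j" using k jn by auto
      have "A k *\<^sub>v v' = (A k * F j) *\<^sub>v uu"
        unfolding v'_def using assoc_mult_mat_vec[OF carr[OF kJ] cF uc] by simp
      also have "\<dots> = (F j * A k) *\<^sub>v uu" using Fcomm[OF jJ kJ kj] by simp
      also have "\<dots> = F j *\<^sub>v (complex_of_real (s k) \<cdot>\<^sub>v uu)"
        using assoc_mult_mat_vec[OF cF carr[OF kJ] uc] Aku[OF k] by simp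
      also have "\<dots> = complex_of_real (s k) \<cdot>\<^sub>v v'"
        unfolding v'_def using mult_mat_vec[OF cF uc] .
      finally show ?thesis .
    qed
    ultimately show ?thesis using v'c by auto
  qed
qed

end



lemma smult_smult_m: "a \<cdot>\<^sub>m (b \<cdot>\<^sub>m M) = (a * b :: complex) \<cdot>\<^sub>m M"
  by (rule eq_matI) auto

lemma one_smult_m: "(1::complex) \<cdot>\<^sub>m M = M"
  by (rule eq_matI) auto

locale majfam =
  fixes N :: nat and B :: "nat \<Rightarrow> complex mat" and I :: "nat set"
  assumes Bc: "p \<in> I \<Longrightarrow> B p \<in> carrier_mat N N"
    and Bsq: "p \<in> I \<Longrightarrow> B p * B p = 1\<^sub>m N"
    and Banti: "p \<in> I \<Longrightarrow> q \<in> I \<Longrightarrow> p \<noteq> q \<Longrightarrow> B p * B q = (-1) \<cdot>\<^sub>m (B q * B p)"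
begin

lemma swap3:
  assumes "a \<in> I" "b \<in> I" "c \<in> I" "c \<noteq> a" "c \<noteq> b"
  shows "(B a * B b) * B c = B c * (B a * B b)"
proof -
  note ca = Bc[OF assms(1)] and cb = Bc[OF assms(2)] and cc = Bc[OF assms(3)]
  have "(B a * B b) * B c = B a * (B b * B c)" using ca cb cc by simp
  also have "\<dots> = B a * ((-1) \<cdot>\<^sub>m (B c * B b))" using Banti[OF assms(2,3)] assms(5) by simp
  also have "\<dots> = (-1) \<cdot>\<^sub>m ((B a * B c) * B b)"
    using mult_smult_distrib[OF ca mult_carrier_mat[OF cc cb], of "-1"] assoc_mult_mat[OF ca cc cb] by simp
  also have "\<dots> = (-1) \<cdot>\<^sub>m (((-1) \<cdot>\<^sub>m (B c * B a)) * B b)" using Banti[OF assms(1,3)] assms(4) by simp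
  also have "\<dots> = B c * (B a * B b)"
    using mult_smult_assoc_mat[OF mult_carrier_mat[OF cc ca] cb, of "-1"] assoc_mult_mat[OF cc ca cb]
    by (simp add: smult_smult_m one_smult_m)
  finally show ?thesis .
qed

lemma pair_sq:
  assumes "a \<in> I" "b \<in> I" "a \<noteq> b"
  shows "(B a * B b) * (B a * B b) = (-1) \<cdot>\<^sub>m 1\<^sub>m N"
proof -
  note ca = Bc[OF assms(1)] and cb = Bc[OF assms(2)]
  have cab: "B a * B b \<in> carrier_mat N N" and cba: "B b * B a \<in> carrier_mat N N" using ca cb by simp_all
  have "(B a * B b) * (B a * B b) = B a * ((B b * B a) * B b)"
    using assoc_mult_mat[OF cab ca cb] assoc_mult_mat[OF ca cb ca] assoc_mult_mat[OF ca cba cb] by metis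
  also have "\<dots> = B a * (((-1) \<cdot>\<^sub>m (B a * B b)) * B b)" using Banti[OF assms(2,1)] assms(3) by simp
  also have "\<dots> = (-1) \<cdot>\<^sub>m ((B a * B a) * (B b * B b))"
    using mult_smult_assoc_mat[OF cab cb, of "-1"] mult_smult_distrib[OF ca mult_carrier_mat[OF cab cb], of "-1"]
      assoc_mult_mat[OF ca cb cb] assoc_mult_mat[OF ca ca mult_carrier_mat[OF cb cb]] by simp
  also have "\<dots> = (-1) \<cdot>\<^sub>m 1\<^sub>m N" using Bsq[OF assms(1)] Bsq[OF assms(2)] by simp
  finally show ?thesis .
qed

lemma pair_comm:
  assumes "a \<in> I" "b \<in> I" "c \<in> I" "d \<in> I" "c \<noteq> a" "c \<noteq> b" "d \<noteq> a" "d \<noteq> b"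
  shows "(B a * B b) * (B c * B d) = (B c * B d) * (B a * B b)"
proof -
  note ca = Bc[OF assms(1)] and cb = Bc[OF assms(2)] and cc = Bc[OF assms(3)] and cd = Bc[OF assms(4)]
  have cab: "B a * B b \<in> carrier_mat N N" using ca cb by simp
  have "(B a * B b) * (B c * B d) = ((B a * B b) * B c) * B d" using cab cc cd by simp
  also have "\<dots> = (B c * (B a * B b)) * B d" using swap3[OF assms(1,2,3,5,6)] by simp
  also have "\<dots> = B c * ((B a * B b) * B d)" using cab cc cd by simp
  also have "\<dots> = B c * (B d * (B a * B b))" using swap3[OF assms(1,2,4,7,8)] by simp
  also have "\<dots> = (B c * B d) * (B a * B b)" using cab cc cd by simp
  finally show ?thesis .
qed

lemma pair_anti:
  assumes "a \<in> I" "b \<in> I" "a \<noteq> b"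
  shows "(B a * B b) * B a = (-1) \<cdot>\<^sub>m (B a * (B a * B b))"
proof -
  note ca = Bc[OF assms(1)] and cb = Bc[OF assms(2)]
  have "(B a * B b) * B a = B a * (B b * B a)" using ca cb by simp
  also have "\<dots> = B a * ((-1) \<cdot>\<^sub>m (B a * B b))" using Banti[OF assms(2,1)] assms(3) by simp
  also have "\<dots> = (-1) \<cdot>\<^sub>m (B a * (B a * B b))"
    using mult_smult_distrib[OF ca mult_carrier_mat[OF ca cb]] by simp
  finally show ?thesis .
qed

end



definition qq :: "nat \<Rightarrow> nat \<Rightarrow> nat" where "qq L j = (if j < L then 2*j+1 else 1)"
definition Ak :: "real \<Rightarrow> nat \<Rightarrow> nat \<Rightarrow> complex mat" where
  "Ak \<theta> L j = \<i> \<cdot>\<^sub>m (majorana \<theta> L (2*j) * majorana \<theta> L (qq L j))"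
definition Fk :: "real \<Rightarrow> nat \<Rightarrow> nat \<Rightarrow> complex mat" where
  "Fk \<theta> L j = majorana \<theta> L (2*j)"

lemma majfam_inst: "majfam (2^L) (majorana \<theta> L) {1..2*L}"
  by unfold_locales (auto intro: maj_sq maj_anti)

lemma smult_mult_both:
  assumes "X \<in> carrier_mat n n" "Y \<in> carrier_mat n n"
  shows "(a \<cdot>\<^sub>m X) * (b \<cdot>\<^sub>m Y) = (a * b :: complex) \<cdot>\<^sub>m (X * Y)"
  using mult_smult_assoc_mat[OF assms(1) smult_carrier_mat[OF assms(2)], of a b]
    mult_smult_distrib[OF assms, of b] by (simp add: smult_smult_m)

lemma idx:
  assumes "j \<in> {1..L}" "2 \<le> L"
  shows "2*j \<in> {1..2*L}" "qq L j \<in> {1..2*L}" "2*j \<noteq> qq L j"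
  using assms by (auto simp: qq_def)

lemma idx2:
  assumes "j \<in> {1..L}" "k \<in> {1..L}" "j \<noteq> k"
  shows "2*j \<noteq> 2*k" "2*j \<noteq> qq L k" "qq L j \<noteq> 2*k" "qq L j \<noteq> qq L k"
proof -
  have o: "odd (qq L x)" for x unfolding qq_def by simp
  show "2*j \<noteq> 2*k" using assms by simp
  show "2*j \<noteq> qq L k" using o[of k] by (metis dvd_triv_left)
  show "qq L j \<noteq> 2*k" using o[of j] by (metis dvd_triv_left)
  show "qq L j \<noteq> qq L k" using assms unfolding qq_def by auto
qed

lemma cinvF_inst:
  assumes L: "2 \<le> L"
  shows "cinvF (2^L) (Ak \<theta> L) {1..L} (Fk \<theta> L)"
proof -
  interpret M: majfam "2^L" "majorana \<theta> L" "{1..2*L}" by (rule majfam_inst)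
  let ?B = "majorana \<theta> L"
  have Bc: "\<And>p. ?B p \<in> carrier_mat (2^L) (2^L)" by simp
  show ?thesis
  proof (unfold_locales)
    fix j assume j: "j \<in> {1..L}"
    show "Ak \<theta> L j \<in> carrier_mat (2^L) (2^L)" unfolding Ak_def
      by (rule smult_carrier_mat, rule mult_carrier_mat[OF Bc Bc])
    show "Ak \<theta> L j * Ak \<theta> L j = 1\<^sub>m (2^L)"
      unfolding Ak_def smult_mult_both[OF mult_carrier_mat[OF Bc Bc] mult_carrier_mat[OF Bc Bc]]
      using M.pair_sq[OF idx[OF j L]] by (simp add: smult_smult_m one_smult_m)
    show "Fk \<theta> L j \<in> carrier_mat (2^L) (2^L)" unfolding Fk_def by simp
    show "Fk \<theta> L j * Fk \<theta> L j = 1\<^sub>m (2^L)" unfolding Fk_def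
      using idx(1)[OF j L] by (intro maj_sq) auto
    have "Ak \<theta> L j * Fk \<theta> L j = \<i> \<cdot>\<^sub>m ((?B (2*j) * ?B (qq L j)) * ?B (2*j))"
      unfolding Ak_def Fk_def using mult_smult_assoc_mat[OF mult_carrier_mat[OF Bc Bc] Bc] by simp
    also have "\<dots> = \<i> \<cdot>\<^sub>m ((-1) \<cdot>\<^sub>m (?B (2*j) * (?B (2*j) * ?B (qq L j))))"
      using M.pair_anti[OF idx[OF j L]] by simp
    also have "\<dots> = (-1) \<cdot>\<^sub>m (Fk \<theta> L j * Ak \<theta> L j)"
      unfolding Ak_def Fk_def using mult_smult_distrib[OF Bc mult_carrier_mat[OF Bc Bc]]
      by (simp add: smult_smult_m mult.commute)
    finally show "Ak \<theta> L j * Fk \<theta> L j = (-1) \<cdot>\<^sub>m (Fk \<theta> L j * Ak \<theta> L j)" .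
  next
    fix j k assume j: "j \<in> {1..L}" and k: "k \<in> {1..L}"
    show "Ak \<theta> L j * Ak \<theta> L k = Ak \<theta> L k * Ak \<theta> L j"
    proof (cases "j = k")
      case False
      note d = idx2[OF j k False]
      show ?thesis
        unfolding Ak_def smult_mult_both[OF mult_carrier_mat[OF Bc Bc] mult_carrier_mat[OF Bc Bc]]
        using M.pair_comm[OF idx(1,2)[OF j L] idx(1,2)[OF k L]] d by (simp add: mult.commute)
    qed simp
    assume kj: "k \<noteq> j"
    note d = idx2[OF j k kj[symmetric]]
    have "Fk \<theta> L j * Ak \<theta> L k = \<i> \<cdot>\<^sub>m (?B (2*j) * (?B (2*k) * ?B (qq L k)))"
      unfolding Ak_def Fk_def using mult_smult_distrib[OF Bc mult_carrier_mat[OF Bc Bc]] by simp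
    also have "\<dots> = \<i> \<cdot>\<^sub>m ((?B (2*k) * ?B (qq L k)) * ?B (2*j))"
      using M.swap3[OF idx(1,2)[OF k L] idx(1)[OF j L]] d by simp
    also have "\<dots> = Ak \<theta> L k * Fk \<theta> L j"
      unfolding Ak_def Fk_def using mult_smult_assoc_mat[OF mult_carrier_mat[OF Bc Bc] Bc] by simp
    finally show "Fk \<theta> L j * Ak \<theta> L k = Ak \<theta> L k * Fk \<theta> L j" .
  qed simp
qed

lemma kit_eq:
  assumes L: "2 \<le> L"
  shows "kitaev_H \<theta> L w = cinv.Hs (2^L) (Ak \<theta> L) w [1..<Suc L]"
proof -
  interpret C: cinvF "2^L" "Ak \<theta> L" "{1..L}" "Fk \<theta> L" by (rule cinvF_inst[OF L])
  let ?g = "\<lambda>j. complex_of_real (w j) \<cdot>\<^sub>m Ak \<theta> L j"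
  have gc: "?g j \<in> carrier_mat (2^L) (2^L)" for j unfolding Ak_def
    by (rule smult_carrier_mat, rule smult_carrier_mat, rule mult_carrier_mat[OF maj_carrier maj_carrier])
  have "[1..<Suc L] = [1..<L] @ [L]" using L by simp
  hence "cinv.Hs (2^L) (Ak \<theta> L) w [1..<Suc L] = mat_sum (2^L) ?g [1..<L] + ?g L"
    unfolding C.Hs_def using gc by (simp add: mat_sum_snoc)
  also have "mat_sum (2^L) ?g [1..<L] = mat_sum (2^L) (\<lambda>j. (complex_of_real (w j) * \<i>) \<cdot>\<^sub>m
                         (majorana \<theta> L (2*j) * majorana \<theta> L (2*j + 1))) [1..<L]"
    by (rule mat_sum_cong) (simp add: Ak_def qq_def smult_smult_m)
  also have "?g L = (complex_of_real (w L) * \<i>) \<cdot>\<^sub>m (majorana \<theta> L (2*L) * majorana \<theta> L 1)"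
    by (simp add: Ak_def qq_def smult_smult_m)
  finally show ?thesis unfolding kitaev_H_def by simp
qed

theorem proposition3p11:
  fixes \<gamma> \<theta> :: real
  assumes "\<gamma> > 0"
  shows "\<exists>c>0. \<forall>L::nat. \<forall>w::nat \<Rightarrow> real.
           L \<ge> 2 \<longrightarrow> (\<forall>j\<in>{1..L}. \<bar>w j\<bar> \<ge> 2 * \<gamma>) \<longrightarrow>
           real_spec (kitaev_H \<theta> L w) - {ground_energy (kitaev_H \<theta> L w)} \<noteq> {} \<and>
           spectral_gap (kitaev_H \<theta> L w) \<ge> c"
proof (intro exI[of _ "4*\<gamma>"] conjI allI impI)
  show "4*\<gamma> > 0" using assms by simp
next
  fix L :: nat and w :: "nat \<Rightarrow> real"
  assume L: "L \<ge> 2" and wb: "\<forall>j\<in>{1..L}. \<bar>w j\<bar> \<ge> 2*\<gamma>"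
  interpret C: cinvF "2^L" "Ak \<theta> L" "{1..L}" "Fk \<theta> L" by (rule cinvF_inst[OF L])
  define H where "H = kitaev_H \<theta> L w"
  define js where "js = [1..<Suc L]"
  have Hjs: "H = C.Hs w js" unfolding H_def js_def by (rule kit_eq[OF L])
  have jsJ: "set js \<subseteq> {1..L}" and dist: "distinct js" and setjs: "set js = {1..L}"
    unfolding js_def by auto
  have Hc: "H \<in> carrier_mat (2^L) (2^L)" unfolding Hjs using C.Hs_carrier[OF jsJ] .
  define S where "S = real_spec H"
  define E where "E = (\<lambda>s. \<Sum>j\<in>{1..L}. w j * s j)"
  have specE: "\<exists>s. (\<forall>j. s j = 1 \<or> s j = -1) \<and> x = E s" if xS: "x \<in> S" for x
  proof -
    obtain v where ev: "eigenvector H v (complex_of_real x)"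
      using xS unfolding S_def real_spec_def eigenvalue_def by auto
    have v: "v \<in> carrier_vec (2^L)" "v \<noteq> 0\<^sub>v (2^L)" "C.Hs w js *\<^sub>v v = complex_of_real x \<cdot>\<^sub>v v"
      using ev Hc unfolding eigenvector_def Hjs by auto
    obtain s where s: "\<forall>j. s j = 1 \<or> s j = -1"
      and sx: "complex_of_real x = complex_of_real (\<Sum>j\<in>set js. w j * s j)"
      using C.eig_vals[OF jsJ dist v] by blast
    have "x = E s" using sx unfolding E_def setjs of_real_eq_iff .
    thus ?thesis using s by blast
  qed
  have Ein: "E s \<in> S" if s: "\<forall>j. s j = 1 \<or> s j = -1" for s
  proof -
    obtain v where v: "v \<in> carrier_vec (2^L)" "v \<noteq> 0\<^sub>v (2^L)"
      "\<forall>j\<in>set js. Ak \<theta> L j *\<^sub>v v = complex_of_real (s j) \<cdot>\<^sub>v v"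
      using C.joint[OF jsJ dist s] by blast
    have "H *\<^sub>v v = complex_of_real (E s) \<cdot>\<^sub>v v"
      unfolding Hjs E_def setjs[symmetric] using C.Hs_apply[OF jsJ dist v(1) v(3)] .
    hence "eigenvector H v (complex_of_real (E s))" unfolding eigenvector_def using v Hc by auto
    thus ?thesis unfolding S_def real_spec_def eigenvalue_def by auto
  qed
  define s0 where "s0 = (\<lambda>j. if w j > 0 then -1 else (1::real))"
  have s0: "\<forall>j. s0 j = 1 \<or> s0 j = -1" unfolding s0_def by auto
  have ws0: "w j * s0 j = - \<bar>w j\<bar>" for j unfolding s0_def by auto
  define g where "g = E s0"
  have gS: "g \<in> S" unfolding g_def using Ein[OF s0] .
  have g_eq: "g = (\<Sum>j\<in>{1..L}. - \<bar>w j\<bar>)" unfolding g_def E_def using ws0 by simp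
  have term_nonneg: "0 \<le> w j * t j + \<bar>w j\<bar>" if "t j = 1 \<or> t j = -1" for t j
    using that by auto
  have lower: "g \<le> x" if xS: "x \<in> S" for x
  proof -
    obtain t where t: "\<forall>j. t j = 1 \<or> t j = -1" and x: "x = E t" using specE[OF xS] by blast
    have "g \<le> E t" unfolding g_eq E_def
    proof (rule sum_mono)
      fix j have "t j = 1 \<or> t j = -1" using t by blast
      thus "- \<bar>w j\<bar> \<le> w j * t j" by (elim disjE) (simp_all add: abs_if)
    qed
    thus ?thesis using x by simp
  qed
  have gap: "4*\<gamma> \<le> E t - g" if t: "\<forall>j. t j = 1 \<or> t j = -1" and k: "k \<in> {1..L}" and tk: "t k \<noteq> s0 k" for t k
  proof -
    have "E t - g = (\<Sum>j\<in>{1..L}. w j * t j + \<bar>w j\<bar>)"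
      unfolding g_eq E_def by (simp add: sum.distrib sum_negf)
    moreover have "w k * t k + \<bar>w k\<bar> \<le> (\<Sum>j\<in>{1..L}. w j * t j + \<bar>w j\<bar>)"
      by (rule member_le_sum[OF k]) (use term_nonneg[of t] t in auto)
    moreover have "w k * t k = \<bar>w k\<bar>"
    proof -
      have "t k = - s0 k" using tk t s0 by (metis minus_minus)
      thus ?thesis using ws0[of k] by simp
    qed
    moreover have "\<bar>w k\<bar> \<ge> 2*\<gamma>" using wb k by auto
    ultimately show ?thesis by linarith
  qed
  have above: "4*\<gamma> \<le> x - g" if xS: "x \<in> S" and xg: "x \<noteq> g" for x
  proof -
    obtain t where t: "\<forall>j. t j = 1 \<or> t j = -1" and x: "x = E t" using specE[OF xS] by blast
    have "\<exists>k\<in>{1..L}. t k \<noteq> s0 k"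
    proof (rule ccontr)
      assume "\<not> ?thesis"
      hence "E t = g" unfolding g_def E_def by (intro sum.cong) auto
      thus False using x xg by simp
    qed
    then obtain k where "k \<in> {1..L}" "t k \<noteq> s0 k" by blast
    thus ?thesis using gap[OF t] x by simp
  qed
  have fin: "finite S"
  proof (rule finite_subset)
    show "S \<subseteq> E ` ({1..L} \<rightarrow>\<^sub>E {-1, 1})"
    proof
      fix x assume xS: "x \<in> S"
      obtain t where t: "\<forall>j. t j = 1 \<or> t j = -1" and x: "x = E t" using specE[OF xS] by blast
      have "E t = E (restrict t {1..L})" unfolding E_def by (intro sum.cong) auto
      moreover have "restrict t {1..L} \<in> {1..L} \<rightarrow>\<^sub>E {-1, 1}" using t by auto
      ultimately show "x \<in> E ` ({1..L} \<rightarrow>\<^sub>E {-1, 1})" using x by blast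
    qed
    show "finite (E ` ({1..L} \<rightarrow>\<^sub>E {-1, 1}))" by (intro finite_imageI finite_PiE) auto
  qed
  have ground: "ground_energy H = g"
    unfolding ground_energy_def S_def[symmetric] by (rule Min_eqI[OF fin lower gS])
  define s1 where "s1 = s0(1 := - s0 1)"
  have s1: "\<forall>j. s1 j = 1 \<or> s1 j = -1"
  proof
    fix j
    have h: "s0 j = 1 \<or> s0 j = -1" "s0 1 = 1 \<or> s0 1 = -1" using s0 by blast+
    show "s1 j = 1 \<or> s1 j = -1" unfolding s1_def using h by (cases "j = 1") auto
  qed
  have one: "(1::nat) \<in> {1..L}" using L by simp
  have "s0 1 = 1 \<or> s0 1 = -1" using s0 by blast
  hence "s1 1 \<noteq> s0 1" unfolding s1_def by auto
  hence "4*\<gamma> \<le> E s1 - g" by (rule gap[OF s1 one])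
  hence "E s1 \<noteq> g" using assms by auto
  hence ne: "E s1 \<in> S - {g}" using Ein[OF s1] by blast
  have finr: "finite (S - {g})" using fin by simp
  have "Min (S - {g}) \<in> S - {g}" using Min_in[OF finr] ne by blast
  hence "4*\<gamma> \<le> Min (S - {g}) - g" using above by blast
  hence "4*\<gamma> \<le> spectral_gap H" unfolding spectral_gap_def ground S_def .
  thus "4*\<gamma> \<le> spectral_gap (kitaev_H \<theta> L w)" unfolding H_def .
  have "real_spec H - {ground_energy H} \<noteq> {}" unfolding ground S_def[symmetric] using ne by blast
  thus "real_spec (kitaev_H \<theta> L w) - {ground_energy (kitaev_H \<theta> L w)} \<noteq> {}" unfolding H_def .
qed

end
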